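(* Let $n>3$ be an integer and let $L(n)$ be the graph defined in the context below. Then $L(n)$ is a vertex-transitive integral graph, and the set of distinct eigenvalues of $L(n)$ is exactly $\{-2,-1,0,n-2,n-1\}$.
   Context: Let $[n]=\{1,2,\dots,n\}$. Let $H(n)$ be the graph whose vertex set is $\{v : v\subseteq [n],\ |v|\in\{1,2\}\}$, where two vertices $v,w$ are adjacent if and only if $v\subset w$ or $w\subset v$ (equivalently, $H(n)$ is the subgraph of the hypercube $Q_n$ induced by the vertices of weight $1$ and $2$). Let $L(n)$ be the line graph of $H(n)$: its vertices are the edges $\{\{i\},\{i,j\}\}$ of $H(n)$ (with $i\neq j$ in $[n]$), denoted $[i,ij]$, and two such vertices are adjacent iff, as edges of $H(n)$, they share exactly one endpoint. The eigenvalues of a graph are the eigenvalues of its adjacency matrix; a graph is integral if all its eigenvalues are integers; a graph is vertex-transitive if its automorphism group acts transitively on its vertex set. *)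

theory Defs
  imports Complex_Main
begin

definition H_vertices :: "nat \<Rightarrow> nat set set" where
  "H_vertices n = {v. v \<subseteq> {1..n} \<and> (card v = 1 \<or> card v = 2)}"

definition H_edges :: "nat \<Rightarrow> nat set set set" where
  "H_edges n = {{v, w} | v w. v \<in> H_vertices n \<and> w \<in> H_vertices n \<and> (v \<subset> w \<or> w \<subset> v)}"

text \<open>L(n), the line graph of H(n): vertex set and adjacency (share exactly one endpoint).\<close>
definition L_vertices :: "nat \<Rightarrow> nat set set set" where
  "L_vertices n = H_edges n"

definition L_adj :: "nat set set \<Rightarrow> nat set set \<Rightarrow> bool" where
  "L_adj e f \<longleftrightarrow> card (e \<inter> f) = 1"

definition graph_eigenvalue :: "'a set \<Rightarrow> ('a \<Rightarrow> 'a \<Rightarrow> bool) \<Rightarrow> complex \<Rightarrow> bool" where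
  "graph_eigenvalue V E \<mu> \<longleftrightarrow>
     (\<exists>x :: 'a \<Rightarrow> complex. (\<exists>v\<in>V. x v \<noteq> 0) \<and>
        (\<forall>v\<in>V. (\<Sum>w\<in>{w\<in>V. E v w}. x w) = \<mu> * x v))"

definition integral_graph :: "'a set \<Rightarrow> ('a \<Rightarrow> 'a \<Rightarrow> bool) \<Rightarrow> bool" where
  "integral_graph V E \<longleftrightarrow> (\<forall>\<mu>. graph_eigenvalue V E \<mu> \<longrightarrow> \<mu> \<in> \<int>)"

definition vertex_transitive :: "'a set \<Rightarrow> ('a \<Rightarrow> 'a \<Rightarrow> bool) \<Rightarrow> bool" where
  "vertex_transitive V E \<longleftrightarrow>
     (\<forall>u\<in>V. \<forall>v\<in>V. \<exists>\<sigma>. bij_betw \<sigma> V V \<and>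
        (\<forall>x\<in>V. \<forall>y\<in>V. E x y \<longleftrightarrow> E (\<sigma> x) (\<sigma> y)) \<and> \<sigma> u = v)"

end

theory Submission imports Defs begin
definition enc :: "nat \<times> nat \<Rightarrow> nat set set" where
  "enc p = {{fst p}, {fst p, snd p}}"
definition Pn :: "nat \<Rightarrow> (nat \<times> nat) set" where
  "Pn n = {(i,j). i \<in> {1..n} \<and> j \<in> {1..n} \<and> i \<noteq> j}"

lemma sing_ne: "k \<noteq> l \<Longrightarrow> {i} \<noteq> {k,l}"
  by (metis doubleton_eq_iff insert_absorb2)
lemma enc_int:
  assumes "i \<noteq> j" "k \<noteq> l"
  shows "enc (i,j) \<inter> enc (k,l) = (if i=k then {{i}} else {}) \<union> (if {i,j}={k,l} then {{i,j}} else {})"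
  using sing_ne[OF assms(2), of i] sing_ne[OF assms(1), of k]
  unfolding enc_def by (auto simp del: insert_commute)

lemma adj_enc:
  assumes "i \<noteq> j" "k \<noteq> l"
  shows "L_adj (enc (i,j)) (enc (k,l)) \<longleftrightarrow> (i = k \<and> j \<noteq> l) \<or> (k = j \<and> l = i)"
proof -
  have e: "{i,j}={k,l} \<longleftrightarrow> (i=k \<and> j=l) \<or> (i=l \<and> j=k)" by (rule doubleton_eq_iff)
  have s: "{i} \<noteq> {i,j}" using sing_ne[OF assms(1)] .
  consider "i = k \<and> j = l" | "i = k \<and> j \<noteq> l" | "k = j \<and> l = i" | "i \<noteq> k \<and> \<not>(k = j \<and> l = i)" by blast
  then show ?thesis
  proof cases
    case 1
    hence "enc (i,j) \<inter> enc (k,l) = {{i},{i,j}}" unfolding enc_int[OF assms] e by auto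
    hence "card (enc (i,j) \<inter> enc (k,l)) = 2" using s by simp
    then show ?thesis unfolding L_adj_def using 1 assms by simp
  next
    case 2
    hence "enc (i,j) \<inter> enc (k,l) = {{i}}" unfolding enc_int[OF assms] e using assms by auto
    then show ?thesis unfolding L_adj_def using 2 by simp
  next
    case 3
    hence "enc (i,j) \<inter> enc (k,l) = {{i,j}}" unfolding enc_int[OF assms] e using assms by auto
    then show ?thesis unfolding L_adj_def using 3 by simp
  next
    case 4
    hence "enc (i,j) \<inter> enc (k,l) = {}" unfolding enc_int[OF assms] e using assms by auto
    then show ?thesis unfolding L_adj_def using 4 by simp
  qed
qed

lemma enc_eq: assumes "i \<noteq> j" "k \<noteq> l" "enc (i,j) = enc (k,l)" shows "i = k \<and> j = l"
proof -
  have "{i} \<in> enc (k,l)" using assms(3) unfolding enc_def by auto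
  hence ik: "i = k" using sing_ne[OF assms(2), of i] unfolding enc_def by auto
  have "{i,j} \<in> enc (k,l)" using assms(3) unfolding enc_def by auto
  moreover have "{i,j} \<noteq> {k}" using sing_ne[OF assms(1), of k] by metis
  ultimately have "{i,j} = {k,l}" unfolding enc_def by auto
  thus ?thesis using ik assms(1,2) by (auto simp: doubleton_eq_iff)
qed

lemma inj_enc: "inj_on enc (Pn n)"
proof (rule inj_onI)
  fix p q assume "p \<in> Pn n" "q \<in> Pn n" "enc p = enc q"
  then show "p = q" unfolding Pn_def using enc_eq[of "fst p" "snd p" "fst q" "snd q"]
    by (cases p; cases q) simp
qed

lemma finite_Pn: "finite (Pn n)"
proof -
  have "Pn n \<subseteq> {1..n} \<times> {1..n}" unfolding Pn_def by auto
  thus ?thesis by (rule finite_subset) auto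
qed

lemma V_eq: "L_vertices n = enc ` Pn n"
proof
  show "L_vertices n \<subseteq> enc ` Pn n"
  proof
    fix e assume "e \<in> L_vertices n"
    then obtain v w where e: "e = {v,w}" and v: "v \<in> H_vertices n" and w: "w \<in> H_vertices n"
      and sub: "v \<subset> w \<or> w \<subset> v" unfolding L_vertices_def H_edges_def by blast
    have key: "{a,b} \<in> enc ` Pn n" if a: "a \<in> H_vertices n" and b: "b \<in> H_vertices n" and ab: "a \<subset> b" for a b
    proof -
      have fb: "finite b" using b unfolding H_vertices_def by (auto intro: finite_subset)
      have "card a < card b" using psubset_card_mono[OF fb ab] .
      with a b have ca: "card a = 1" and cb: "card b = 2" unfolding H_vertices_def by auto
      obtain i where ai: "a = {i}" using ca by (rule card_1_singletonE)
      obtain x y where bxy: "b = {x,y}" "x \<noteq> y" using cb unfolding card_2_iff by blast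
      have "i \<in> b" using ai ab by auto
      then obtain j where bij: "b = {i,j}" "i \<noteq> j" using bxy by auto
      have "i \<in> {1..n}" "j \<in> {1..n}" using b bij unfolding H_vertices_def by auto
      hence "(i,j) \<in> Pn n" using bij unfolding Pn_def by auto
      moreover have "{a,b} = enc (i,j)" unfolding enc_def using ai bij by simp
      ultimately show "{a,b} \<in> enc ` Pn n" by blast
    qed
    from sub show "e \<in> enc ` Pn n"
    proof
      assume "v \<subset> w" thus ?thesis using key[OF v w] e by simp
    next
      assume "w \<subset> v" thus ?thesis using key[OF w v] e by (simp add: insert_commute)
    qed
  qed
next
  show "enc ` Pn n \<subseteq> L_vertices n"
  proof
    fix e assume "e \<in> enc ` Pn n"
    then obtain i j where ij: "i \<in> {1..n}" "j \<in> {1..n}" "i \<noteq> j" and e: "e = enc (i,j)"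
      unfolding Pn_def by auto
    have "{i} \<in> H_vertices n" "{i,j} \<in> H_vertices n" using ij unfolding H_vertices_def by auto
    moreover have "{i} \<subset> {i,j}" using ij by auto
    ultimately show "e \<in> L_vertices n" unfolding L_vertices_def H_edges_def e enc_def mem_Collect_eq
      by (intro exI[where x="{i}"] exI[where x="{i,j}"]) simp
  qed
qed


lemma nbr_filter:
  assumes "(i,j) \<in> Pn n"
  shows "{q \<in> Pn n. L_adj (enc (i,j)) (enc q)} = (\<lambda>k. (i,k)) ` ({1..n}-{i,j}) \<union> {(j,i)}"
proof -
  have ij: "i \<noteq> j" "i \<in> {1..n}" "j \<in> {1..n}" using assms unfolding Pn_def by auto
  show ?thesis
  proof (intro equalityI subsetI)
    fix q assume q: "q \<in> {q \<in> Pn n. L_adj (enc (i,j)) (enc q)}"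
    obtain k l where qkl: "q = (k,l)" by (cases q)
    have kl: "k \<noteq> l" "k \<in> {1..n}" "l \<in> {1..n}" using q qkl unfolding Pn_def by auto
    have "(i = k \<and> j \<noteq> l) \<or> (k = j \<and> l = i)" using q qkl adj_enc[OF ij(1) kl(1)] by simp
    thus "q \<in> (\<lambda>k. (i,k)) ` ({1..n}-{i,j}) \<union> {(j,i)}" using qkl kl by auto
  next
    fix q assume q: "q \<in> (\<lambda>k. (i,k)) ` ({1..n}-{i,j}) \<union> {(j,i)}"
    then show "q \<in> {q \<in> Pn n. L_adj (enc (i,j)) (enc q)}"
    proof
      assume "q \<in> (\<lambda>k. (i,k)) ` ({1..n}-{i,j})"
      then obtain k where k0: "q = (i,k)" "k \<in> {1..n}-{i,j}" by blast
      hence k: "q = (i,k)" "k \<in> {1..n}" "k \<noteq> i" "k \<noteq> j" by auto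
      have "L_adj (enc (i,j)) (enc (i,k))" using adj_enc[OF ij(1), of i k] k by simp
      thus ?thesis using k ij unfolding Pn_def by auto
    next
      assume "q \<in> {(j,i)}"
      hence k: "q = (j,i)" by simp
      have "L_adj (enc (i,j)) (enc (j,i))" using adj_enc[OF ij(1), of j i] ij by simp
      thus ?thesis using k ij unfolding Pn_def by auto
    qed
  qed
qed

definition Srow :: "nat \<Rightarrow> (nat \<times> nat \<Rightarrow> complex) \<Rightarrow> nat \<Rightarrow> complex" where
  "Srow n y i = (\<Sum>k\<in>{1..n}-{i}. y (i,k))"

lemma nbr_sum:
  assumes "(i,j) \<in> Pn n"
  shows "(\<Sum>w\<in>{w\<in>L_vertices n. L_adj (enc (i,j)) w}. x w) =
         Srow n (x \<circ> enc) i - x (enc (i,j)) + x (enc (j,i))"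
proof -
  have ij: "i \<noteq> j" "i \<in> {1..n}" "j \<in> {1..n}" using assms unfolding Pn_def by auto
  let ?Q = "{q \<in> Pn n. L_adj (enc (i,j)) (enc q)}"
  have set: "{w\<in>L_vertices n. L_adj (enc (i,j)) w} = enc ` ?Q"
    unfolding V_eq by auto
  have inj: "inj_on enc ?Q" using inj_enc by (rule inj_on_subset) auto
  have "(\<Sum>w\<in>{w\<in>L_vertices n. L_adj (enc (i,j)) w}. x w) = (\<Sum>q\<in>?Q. x (enc q))"
    unfolding set using sum.reindex[OF inj, of x] by simp
  also have "\<dots> = (\<Sum>q\<in>(\<lambda>k. (i,k)) ` ({1..n}-{i,j}). x (enc q)) + x (enc (j,i))"
    unfolding nbr_filter[OF assms] using ij by (subst sum.union_disjoint) auto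
  also have "(\<Sum>q\<in>(\<lambda>k. (i,k)) ` ({1..n}-{i,j}). x (enc q)) = (\<Sum>k\<in>{1..n}-{i,j}. x (enc (i,k)))"
    by (subst sum.reindex) (auto simp: inj_on_def)
  also have "\<dots> = (\<Sum>k\<in>({1..n}-{i})-{j}. x (enc (i,k)))"
    by (rule sum.cong) auto
  also have "\<dots> = Srow n (x \<circ> enc) i - x (enc (i,j))"
    unfolding Srow_def using ij by (subst sum_diff1) auto
  finally show ?thesis .
qed

definition EV :: "nat \<Rightarrow> complex \<Rightarrow> (nat \<times> nat \<Rightarrow> complex) \<Rightarrow> bool" where
  "EV n \<mu> y \<longleftrightarrow> (\<exists>p\<in>Pn n. y p \<noteq> 0) \<and>
     (\<forall>i j. (i,j) \<in> Pn n \<longrightarrow> Srow n y i - y (i,j) + y (j,i) = \<mu> * y (i,j))"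

lemma eig_iff: "graph_eigenvalue (L_vertices n) L_adj \<mu> \<longleftrightarrow> (\<exists>y. EV n \<mu> y)"
proof
  assume "graph_eigenvalue (L_vertices n) L_adj \<mu>"
  then obtain x where x0: "\<exists>v\<in>L_vertices n. x v \<noteq> 0"
    and xe: "\<forall>v\<in>L_vertices n. (\<Sum>w\<in>{w\<in>L_vertices n. L_adj v w}. x w) = \<mu> * x v"
    unfolding graph_eigenvalue_def by blast
  have "EV n \<mu> (x \<circ> enc)"
    unfolding EV_def
  proof (intro conjI allI impI)
    show "\<exists>p\<in>Pn n. (x \<circ> enc) p \<noteq> 0" using x0 unfolding V_eq by auto
  next
    fix i j assume p: "(i,j) \<in> Pn n"
    have "enc (i,j) \<in> L_vertices n" unfolding V_eq using p by blast
    from xe[rule_format, OF this] nbr_sum[OF p, of x]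
    show "Srow n (x \<circ> enc) i - (x \<circ> enc) (i, j) + (x \<circ> enc) (j, i) = \<mu> * (x \<circ> enc) (i, j)"
      by simp
  qed
  thus "\<exists>y. EV n \<mu> y" by blast
next
  assume "\<exists>y. EV n \<mu> y"
  then obtain y where y: "EV n \<mu> y" by blast
  define x where "x = (\<lambda>w. y (the_inv_into (Pn n) enc w))"
  have xe: "x (enc p) = y p" if "p \<in> Pn n" for p
    unfolding x_def using the_inv_into_f_f[OF inj_enc that] by simp
  show "graph_eigenvalue (L_vertices n) L_adj \<mu>"
    unfolding graph_eigenvalue_def
  proof (intro exI conjI ballI)
    show "\<exists>v\<in>L_vertices n. x v \<noteq> 0" using y xe unfolding EV_def V_eq by auto
  next
    fix v assume "v \<in> L_vertices n"
    then obtain i j where p: "(i,j) \<in> Pn n" and v: "v = enc (i,j)" unfolding V_eq by auto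
    have jp: "(j,i) \<in> Pn n" using p unfolding Pn_def by auto
    have sr: "Srow n (x \<circ> enc) i = Srow n y i"
      unfolding Srow_def using p by (intro sum.cong) (auto simp: xe Pn_def)
    show "(\<Sum>w\<in>{w\<in>L_vertices n. L_adj v w}. x w) = \<mu> * x v"
      unfolding v nbr_sum[OF p] sr xe[OF p] xe[OF jp] using y p unfolding EV_def by blast
  qed
qed


lemma upper:
  assumes "EV n \<mu> y"
  shows "\<mu> \<in> {-2, -1, 0, of_nat n - 2, of_nat n - 1}"
proof -
  define S where "S = Srow n y"
  define N :: complex where "N = of_nat n"
  define T where "T = (\<Sum>j\<in>{1..n}. S j)"
  have E: "S i - y (i,j) + y (j,i) = \<mu> * y (i,j)" if "(i,j) \<in> Pn n" for i j
    using assms that unfolding EV_def S_def by blast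
  have PS: "(j,i) \<in> Pn n" if "(i,j) \<in> Pn n" for i j using that unfolding Pn_def by auto
  have st1: "\<mu> * (\<mu> + 2) * y (i,j) = (\<mu>+1) * S i + S j" if p: "(i,j) \<in> Pn n" for i j
  proof -
    have a: "S i - y (i,j) + y (j,i) = \<mu> * y (i,j)" using E[OF p] .
    have b: "S j - y (j,i) + y (i,j) = \<mu> * y (j,i)" using E[OF PS[OF p]] .
    from a b show ?thesis by algebra
  qed
  have st2: "\<mu> * (\<mu> + 2) * S i = (\<mu>+1) * (N - 1) * S i + (T - S i)" if i: "i \<in> {1..n}" for i
  proof -
    have "\<mu> * (\<mu> + 2) * S i = (\<Sum>j\<in>{1..n}-{i}. \<mu> * (\<mu> + 2) * y (i,j))"
      unfolding S_def Srow_def by (simp add: sum_distrib_left)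
    also have "\<dots> = (\<Sum>j\<in>{1..n}-{i}. (\<mu>+1) * S i + S j)"
      by (rule sum.cong) (use i in \<open>auto intro!: st1 simp: Pn_def\<close>)
    also have "\<dots> = of_nat (card ({1..n}-{i})) * ((\<mu>+1) * S i) + (\<Sum>j\<in>{1..n}-{i}. S j)"
      by (simp add: sum.distrib)
    also have "(\<Sum>j\<in>{1..n}-{i}. S j) = T - S i"
      unfolding T_def using i by (simp add: sum_diff1)
    also have "of_nat (card ({1..n}-{i})) = N - 1"
      unfolding N_def using i by (auto simp: of_nat_diff)
    finally show ?thesis by (simp add: algebra_simps)
  qed
  define c where "c = (\<mu>+1) * (\<mu> - (N-2))"
  have st3: "c * S i = T" if i: "i \<in> {1..n}" for i
    using st2[OF i] unfolding c_def by algebra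
  have st4: "c * T = N * T"
  proof -
    have "c * T = (\<Sum>i\<in>{1..n}. c * S i)" unfolding T_def by (simp add: sum_distrib_left)
    also have "\<dots> = (\<Sum>i\<in>{1..n}. T)" by (rule sum.cong) (auto simp: st3)
    also have "\<dots> = N * T" unfolding N_def by simp
    finally show ?thesis .
  qed
  obtain p where p: "p \<in> Pn n" "y p \<noteq> 0" using assms unfolding EV_def by blast
  obtain i0 j0 where p0: "p = (i0,j0)" by (cases p)
  have i0: "i0 \<in> {1..n}" "j0 \<in> {1..n}" using p p0 unfolding Pn_def by auto
  show ?thesis
  proof (cases "c = 0")
    case True
    hence "\<mu> + 1 = 0 \<or> \<mu> - (N - 2) = 0" unfolding c_def by simp
    hence "\<mu> = -1 \<or> \<mu> = N - 2" by (auto simp: eq_neg_iff_add_eq_0[symmetric])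
    thus ?thesis unfolding N_def by auto
  next
    case False
    show ?thesis
    proof (cases "T = 0")
      case True
      have "S i0 = 0" "S j0 = 0" using st3[OF i0(1)] st3[OF i0(2)] True False by auto
      hence "\<mu> * (\<mu> + 2) * y p = 0" using st1[of i0 j0] p p0 by simp
      hence "\<mu> = 0 \<or> \<mu> + 2 = 0" using p(2) by simp
      hence "\<mu> = 0 \<or> \<mu> = -2" by (auto simp: eq_neg_iff_add_eq_0[symmetric])
      thus ?thesis by auto
    next
      case False
      hence "c = N" using st4 by simp
      moreover have "(\<mu> - (N - 1)) * (\<mu> + 2) = (\<mu>+1) * (\<mu> - (N-2)) - N" by (simp add: algebra_simps)
      ultimately have "(\<mu> - (N - 1)) * (\<mu> + 2) = 0" unfolding c_def by simp
      hence "\<mu> - (N - 1) = 0 \<or> \<mu> + 2 = 0" by simp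
      hence "\<mu> = N - 1 \<or> \<mu> = -2" by (auto simp: eq_neg_iff_add_eq_0[symmetric])
      thus ?thesis unfolding N_def by auto
    qed
  qed
qed



lemma rowsum: "(i::nat) \<in> {1..n} \<Longrightarrow> (\<Sum>k\<in>{1..n}-{i}. f k) = (\<Sum>k\<in>{1..n}. f k) - (f i :: complex)"
  using sum_diff1[of "{1..n}" f i] by simp

lemma card_row: "(i::nat) \<in> {1..n} \<Longrightarrow> of_nat (card ({1..n}-{i})) = (of_nat n - 1 :: complex)"
  by (auto simp: of_nat_diff)

lemma EV_lin:
  fixes g :: "nat \<Rightarrow> complex"
  assumes g0: "(\<Sum>k\<in>{1..n}. g k) = 0"
    and eq: "\<And>a b. (of_nat n - 2) * \<alpha> * a + (\<alpha> - \<beta>) * b = \<mu> * (\<alpha> * a + \<beta> * b)"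
    and nz: "p \<in> Pn n" "\<alpha> * g (fst p) + \<beta> * g (snd p) \<noteq> 0"
  shows "EV n \<mu> (\<lambda>(a,b). \<alpha> * g a + \<beta> * g b)"
  unfolding EV_def
proof (intro conjI allI impI)
  show "\<exists>p\<in>Pn n. (case p of (a, b) \<Rightarrow> \<alpha> * g a + \<beta> * g b) \<noteq> 0"
    using nz by (intro bexI[of _ p]) (auto split: prod.splits)
next
  fix i j assume p: "(i,j) \<in> Pn n"
  hence i: "i \<in> {1..n}" unfolding Pn_def by auto
  have "Srow n (\<lambda>(a,b). \<alpha> * g a + \<beta> * g b) i = (\<Sum>k\<in>{1..n}-{i}. \<alpha> * g i + \<beta> * g k)"
    unfolding Srow_def by simp
  also have "\<dots> = of_nat (card ({1..n}-{i})) * (\<alpha> * g i) + \<beta> * (\<Sum>k\<in>{1..n}-{i}. g k)"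
    by (simp add: sum.distrib sum_distrib_left)
  also have "\<dots> = (of_nat n - 1) * (\<alpha> * g i) + \<beta> * (0 - g i)"
    using rowsum[OF i, of g] card_row[OF i] g0 by simp
  finally have S: "Srow n (\<lambda>(a,b). \<alpha> * g a + \<beta> * g b) i = (of_nat n - 1) * (\<alpha> * g i) - \<beta> * g i"
    by simp
  show "Srow n (\<lambda>(a,b). \<alpha> * g a + \<beta> * g b) i - (case (i, j) of (a, b) \<Rightarrow> \<alpha> * g a + \<beta> * g b) +
        (case (j, i) of (a, b) \<Rightarrow> \<alpha> * g a + \<beta> * g b) =
        \<mu> * (case (i, j) of (a, b) \<Rightarrow> \<alpha> * g a + \<beta> * g b)"
    unfolding S using eq[of "g i" "g j"] by (simp add: algebra_simps)
qed

lemma EV_prod: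
  fixes f h :: "nat \<Rightarrow> complex"
  assumes f0: "(\<Sum>k\<in>{1..n}. f k) = 0" and h0: "(\<Sum>k\<in>{1..n}. h k) = 0"
    and fh: "\<And>k. f k * h k = 0" and ss: "s * s = 1"
    and nz: "p \<in> Pn n" "f (fst p) * h (snd p) + s * h (fst p) * f (snd p) \<noteq> 0"
  shows "EV n (s - 1) (\<lambda>(a,b). f a * h b + s * h a * f b)"
  unfolding EV_def
proof (intro conjI allI impI)
  show "\<exists>p\<in>Pn n. (case p of (a, b) \<Rightarrow> f a * h b + s * h a * f b) \<noteq> 0"
    using nz by (intro bexI[of _ p]) (auto split: prod.splits)
next
  fix i j assume p: "(i,j) \<in> Pn n"
  hence i: "i \<in> {1..n}" unfolding Pn_def by auto
  have "Srow n (\<lambda>(a,b). f a * h b + s * h a * f b) i = (\<Sum>k\<in>{1..n}-{i}. f i * h k + s * h i * f k)"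
    unfolding Srow_def by simp
  also have "\<dots> = f i * (\<Sum>k\<in>{1..n}-{i}. h k) + s * h i * (\<Sum>k\<in>{1..n}-{i}. f k)"
    by (simp add: sum.distrib sum_distrib_left)
  also have "\<dots> = f i * (0 - h i) + s * h i * (0 - f i)"
    using rowsum[OF i, of f] rowsum[OF i, of h] f0 h0 by simp
  also have "\<dots> = - (1 + s) * (f i * h i)" by (simp add: algebra_simps)
  also have "\<dots> = 0" using fh[of i] by simp
  finally have S: "Srow n (\<lambda>(a,b). f a * h b + s * h a * f b) i = 0" .
  have "- (f i * h j + s * h i * f j) + (f j * h i + s * h j * f i) = (s - 1) * (f i * h j + s * h i * f j)"
  proof -
    have "(s - 1) * (f i * h j + s * h i * f j) = (s-1) * f i * h j + (s * s - s) * h i * f j"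
      by (simp add: algebra_simps)
    also have "\<dots> = (s-1) * f i * h j + (1 - s) * h i * f j" using ss by simp
    finally show ?thesis by (simp add: algebra_simps)
  qed
  thus "Srow n (\<lambda>(a,b). f a * h b + s * h a * f b) i - (case (i, j) of (a, b) \<Rightarrow> f a * h b + s * h a * f b) +
        (case (j, i) of (a, b) \<Rightarrow> f a * h b + s * h a * f b) =
        (s - 1) * (case (i, j) of (a, b) \<Rightarrow> f a * h b + s * h a * f b)"
    unfolding S by simp
qed

lemma EV_const:
  assumes "n > 3"
  shows "EV n (of_nat n - 1) (\<lambda>_. 1)"
  unfolding EV_def
proof (intro conjI allI impI)
  show "\<exists>p\<in>Pn n. (1::complex) \<noteq> 0" using assms by (intro bexI[of _ "(1,2)"]) (auto simp: Pn_def)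
next
  fix i j assume p: "(i,j) \<in> Pn n"
  hence i: "i \<in> {1..n}" unfolding Pn_def by auto
  show "Srow n (\<lambda>_. 1) i - 1 + 1 = (of_nat n - 1) * 1"
    unfolding Srow_def using card_row[OF i] by simp
qed

definition uu :: "nat \<Rightarrow> complex" where "uu k = (if k = 1 then 1 else 0) - (if k = 2 then 1 else 0)"
definition vv :: "nat \<Rightarrow> complex" where "vv k = (if k = 3 then 1 else 0) - (if k = 4 then 1 else 0)"

lemma sum_uu: "n > 3 \<Longrightarrow> (\<Sum>k\<in>{1..n}. uu k) = 0"
  unfolding uu_def by (simp add: sum_subtractf)
lemma sum_vv: "n > 3 \<Longrightarrow> (\<Sum>k\<in>{1..n}. vv k) = 0"
  unfolding vv_def by (simp add: sum_subtractf)
lemma uv: "uu k * vv k = 0" unfolding uu_def vv_def by auto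

lemma lower:
  assumes n: "n > 3" and that: "\<mu> \<in> {-2, -1, 0, of_nat n - 2, of_nat n - 1}"
  shows "\<exists>y. EV n \<mu> y"
proof -
  have P13: "(1,3) \<in> Pn n" "(2,1) \<in> Pn n" using n by (auto simp: Pn_def)
  have "\<mu> = -2 \<or> \<mu> = -1 \<or> \<mu> = 0 \<or> \<mu> = of_nat n - 2 \<or> \<mu> = of_nat n - 1" using that by auto
  then show ?thesis
  proof (elim disjE)
    assume m: "\<mu> = -2"
    have "EV n ((-1) - 1) (\<lambda>(a,b). uu a * vv b + (-1) * vv a * uu b)"
      by (rule EV_prod[OF sum_uu[OF n] sum_vv[OF n] uv _ P13(1)]) (auto simp: uu_def vv_def)
    thus ?thesis using m by auto
  next
    assume m: "\<mu> = 0"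
    have "EV n (1 - 1) (\<lambda>(a,b). uu a * vv b + 1 * vv a * uu b)"
      by (rule EV_prod[OF sum_uu[OF n] sum_vv[OF n] uv _ P13(1)]) (auto simp: uu_def vv_def)
    thus ?thesis using m by auto
  next
    assume m: "\<mu> = -1"
    have "EV n \<mu> (\<lambda>(a,b). 0 * uu a + 1 * uu b)"
      by (rule EV_lin[OF sum_uu[OF n] _ P13(2)]) (auto simp: uu_def m algebra_simps)
    thus ?thesis by blast
  next
    assume m: "\<mu> = of_nat n - 2"
    have "EV n \<mu> (\<lambda>(a,b). (of_nat n - 1) * uu a + 1 * uu b)"
    proof (rule EV_lin[OF sum_uu[OF n] _ P13(1)])
      show "(of_nat n - 1) * uu (fst (1, 3)) + 1 * uu (snd (1, 3)) \<noteq> 0"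
        using n by (simp add: uu_def)
    qed (simp add: m algebra_simps)
    thus ?thesis by blast
  next
    assume m: "\<mu> = of_nat n - 1"
    show ?thesis using EV_const[OF n] m by blast
  qed
qed


definition sw :: "nat \<Rightarrow> nat \<Rightarrow> nat \<Rightarrow> nat" where
  "sw a b x = (if x = a then b else if x = b then a else x)"

lemma sw_inj: "inj (sw a b)" unfolding inj_def sw_def by auto
lemma sw_in: "a \<in> A \<Longrightarrow> b \<in> A \<Longrightarrow> x \<in> A \<Longrightarrow> sw a b x \<in> A" unfolding sw_def by auto

lemma perm_exists:
  assumes "(i,j) \<in> Pn n" "(k,l) \<in> Pn n"
  shows "\<exists>\<pi>. inj \<pi> \<and> (\<forall>x\<in>{1..n}. \<pi> x \<in> {1..n}) \<and> \<pi> i = k \<and> \<pi> j = l"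
proof -
  have ij: "i \<in> {1..n}" "j \<in> {1..n}" "i \<noteq> j" "k \<in> {1..n}" "l \<in> {1..n}" "k \<noteq> l"
    using assms unfolding Pn_def by auto
  define j' where "j' = sw i k j"
  have j'k: "j' \<noteq> k" unfolding j'_def sw_def using ij by auto
  have j'n: "j' \<in> {1..n}" unfolding j'_def using ij by (intro sw_in) auto
  define \<pi> where "\<pi> = sw j' l \<circ> sw i k"
  have "inj \<pi>" unfolding \<pi>_def using sw_inj by (rule inj_compose) (rule sw_inj)
  moreover have "\<forall>x\<in>{1..n}. \<pi> x \<in> {1..n}" unfolding \<pi>_def comp_def
    using ij j'n sw_in[of j' "{1..n}" l] sw_in[of i "{1..n}" k] by blast
  moreover have "\<pi> i = k" unfolding \<pi>_def using j'k ij by (simp add: sw_def)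
  moreover have "\<pi> j = l"
  proof -
    have "sw i k j = j'" by (simp add: j'_def)
    thus ?thesis unfolding \<pi>_def by (simp add: sw_def)
  qed
  ultimately show ?thesis by blast
qed

lemma VT: "vertex_transitive (L_vertices n) L_adj"
  unfolding vertex_transitive_def
proof (intro ballI)
  fix u v assume u: "u \<in> L_vertices n" and v: "v \<in> L_vertices n"
  obtain p where p: "p \<in> Pn n" "u = enc p" using u unfolding V_eq by auto
  obtain q where q: "q \<in> Pn n" "v = enc q" using v unfolding V_eq by auto
  obtain \<pi> where \<pi>: "inj \<pi>" "\<forall>x\<in>{1..n}. \<pi> x \<in> {1..n}" "\<pi> (fst p) = fst q" "\<pi> (snd p) = snd q"
    using perm_exists[of "fst p" "snd p" n "fst q" "snd q"] p q by auto
  define \<sigma> where "\<sigma> e = (\<lambda>w. \<pi> ` w) ` e" for e :: "nat set set"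
  define m where "m r = (\<pi> (fst r), \<pi> (snd r))" for r :: "nat \<times> nat"
  have \<sigma>enc: "\<sigma> (enc r) = enc (m r)" for r unfolding \<sigma>_def enc_def m_def by simp
  have mP: "m r \<in> Pn n" if "r \<in> Pn n" for r
    using that \<pi>(2) injD[OF \<pi>(1)] unfolding Pn_def m_def by auto
  have m_inj: "m r = m r' \<Longrightarrow> r = r'" for r r'
    unfolding m_def using injD[OF \<pi>(1)] by (cases r; cases r') auto
  have sub: "\<sigma> ` L_vertices n \<subseteq> L_vertices n"
    unfolding V_eq using mP \<sigma>enc by auto
  have inj: "inj_on \<sigma> (L_vertices n)"
  proof (rule inj_onI)
    fix x y assume "x \<in> L_vertices n" "y \<in> L_vertices n" "\<sigma> x = \<sigma> y"
    then obtain r r' where r: "r \<in> Pn n" "r' \<in> Pn n" "x = enc r" "y = enc r'" "enc (m r) = enc (m r')"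
      unfolding V_eq using \<sigma>enc by auto
    have "m r = m r'" using inj_onD[OF inj_enc r(5) mP[OF r(1)] mP[OF r(2)]] .
    hence "r = r'" by (rule m_inj)
    thus "x = y" using r by simp
  qed
  have fin: "finite (L_vertices n)" unfolding V_eq using finite_Pn by simp
  have "bij_betw \<sigma> (L_vertices n) (L_vertices n)"
    unfolding bij_betw_def using inj endo_inj_surj[OF fin sub inj] by simp
  moreover have "\<forall>x\<in>L_vertices n. \<forall>y\<in>L_vertices n. L_adj x y \<longleftrightarrow> L_adj (\<sigma> x) (\<sigma> y)"
  proof (intro ballI)
    fix x y assume "x \<in> L_vertices n" "y \<in> L_vertices n"
    then obtain a b c d where ab: "(a,b) \<in> Pn n" "x = enc (a,b)" and cd: "(c,d) \<in> Pn n" "y = enc (c,d)"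
      unfolding V_eq by auto
    have ab': "a \<noteq> b" "c \<noteq> d" using ab cd unfolding Pn_def by auto
    have ab'': "\<pi> a \<noteq> \<pi> b" "\<pi> c \<noteq> \<pi> d" using ab' injD[OF \<pi>(1)] by blast+
    have ieq: "\<pi> s = \<pi> t \<longleftrightarrow> s = t" for s t using injD[OF \<pi>(1)] by blast
    show "L_adj x y \<longleftrightarrow> L_adj (\<sigma> x) (\<sigma> y)"
      unfolding ab(2) cd(2) \<sigma>enc m_def fst_conv snd_conv adj_enc[OF ab'] adj_enc[OF ab''] ieq ..
  qed
  moreover have "\<sigma> u = v" using p q \<sigma>enc \<pi>(3,4) unfolding m_def by simp
  ultimately show "\<exists>\<sigma>. bij_betw \<sigma> (L_vertices n) (L_vertices n) \<and>
      (\<forall>x\<in>L_vertices n. \<forall>y\<in>L_vertices n. L_adj x y \<longleftrightarrow> L_adj (\<sigma> x) (\<sigma> y)) \<and> \<sigma> u = v"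
    by blast
qed

theorem theorem3p4:
  fixes n :: nat
  assumes "n > 3"
  shows "vertex_transitive (L_vertices n) L_adj \<and> integral_graph (L_vertices n) L_adj \<and>
         {\<mu>. graph_eigenvalue (L_vertices n) L_adj \<mu>} =
           {-2, -1, 0, of_nat n - 2, of_nat n - 1}"
proof -
  have seq: "{\<mu>. graph_eigenvalue (L_vertices n) L_adj \<mu>} = {-2, -1, 0, of_nat n - 2, of_nat n - 1}"
  proof (intro equalityI subsetI)
    fix \<mu> assume "\<mu> \<in> {\<mu>. graph_eigenvalue (L_vertices n) L_adj \<mu>}"
    then obtain y where "EV n \<mu> y" using eig_iff by blast
    thus "\<mu> \<in> {-2, -1, 0, of_nat n - 2, of_nat n - 1}" by (rule upper)
  next
    fix \<mu> :: complex assume "\<mu> \<in> {-2, -1, 0, of_nat n - 2, of_nat n - 1}"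
    from lower[OF assms this] show "\<mu> \<in> {\<mu>. graph_eigenvalue (L_vertices n) L_adj \<mu>}"
      using eig_iff by blast
  qed
  have "integral_graph (L_vertices n) L_adj"
    unfolding integral_graph_def
  proof (intro allI impI)
    fix \<mu> assume "graph_eigenvalue (L_vertices n) L_adj \<mu>"
    hence "\<mu> \<in> {-2, -1, 0, of_nat n - 2, of_nat n - 1}" using seq by blast
    thus "\<mu> \<in> \<int>" by (auto intro: Ints_diff)
  qed
  with VT seq show ?thesis by blast
qed

end
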